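(* Let $(\xi,\sigma)$ be a (sufficiently regular, global) solution of the normalized flow described below on $[0,\infty)\times\mathbb S^1$. Then: (i) $\tau\mapsto\int_0^1|\xi(\tau,s)|^2ds$ is monotone increasing, and $\int_0^1|\xi(\tau,s)|^2ds\le\frac1{4\pi^2}$ for all $\tau$; (ii) $\tau\mapsto\int_0^1\sigma(\tau,s)\,ds$ is monotone increasing, and $\int_0^1\sigma(\tau,s)\,ds\le\int_0^1|\xi(\tau,s)|^2ds$ for all $\tau$; (iii) the limits as $\tau\to\infty$ of $\int_0^1\sigma(\tau,s)\,ds$ and of $\int_0^1|\xi(\tau,s)|^2ds$ exist and coincide.
   Context: $\mathbb S^1=\mathbb R/\mathbb Z$, $d\ge2$. The normalized flow: $\xi:[0,\infty)\times\mathbb S^1\to\mathbb R^d$ and $\sigma:[0,\infty)\times\mathbb S^1\to\mathbb R$ with $|\partial_s\xi(\tau,s)|=1$ and $\int_0^1\xi(\tau,s)\,ds=0$ for all $(\tau,s)$, satisfying $$\partial_\tau\xi=\partial_s(\sigma\partial_s\xi)+\xi,\qquad \partial_{ss}\sigma-\sigma|\partial_{ss}\xi|^2=-1,\ \ \sigma(\tau,\cdot)\ \text{periodic on } \mathbb S^1.$$ *)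

theory Defs
  imports "HOL-Analysis.Analysis"
begin

text \<open>Defined coinductively,
  i.e. derivatives of all orders exist.\<close>

coinductive Cinf_on :: "(real \<times> real) set \<Rightarrow> (real \<times> real \<Rightarrow> 'b::real_normed_vector) \<Rightarrow> bool"
  for S where
  Cinf_onI: "\<lbrakk> \<forall>z\<in>S. (f has_derivative (\<lambda>(h, k). h *\<^sub>R ft z + k *\<^sub>R fs z)) (at z within S);
              Cinf_on S ft; Cinf_on S fs \<rbrakk> \<Longrightarrow> Cinf_on S f"

definition dS :: "(real \<Rightarrow> real \<Rightarrow> 'b::real_normed_vector) \<Rightarrow> real \<Rightarrow> real \<Rightarrow> 'b" where
  "dS f \<tau> s = vector_derivative (\<lambda>r. f \<tau> r) (at s)"

end

theory Submission
  imports Defs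
begin

lemma hvd_inner:
  assumes "(f has_vector_derivative f') (at x within S)" "(g has_vector_derivative g') (at x within S)"
  shows "((\<lambda>x. inner (f x) (g x)) has_vector_derivative (inner (f x) g' + inner f' (g x))) (at x within S)"
  by (rule bounded_bilinear.has_vector_derivative[OF bounded_bilinear_inner assms])

lemma hvd_shift:
  assumes "(f has_vector_derivative f') (at (x + c))"
  shows "((\<lambda>s. f (s + c)) has_vector_derivative f') (at x)"
proof -
  have "((\<lambda>s. s + c) has_vector_derivative 1) (at x)"
    by (auto intro!: derivative_eq_intros)
  from vector_diff_chain_at[OF this] assms show ?thesis by (simp add: o_def)
qed

lemma deriv_periodic:
  assumes d: "\<And>s. (f has_vector_derivative f' s) (at s)" and p: "\<And>s. f (s + 1) = f s"
  shows "f' (s + 1) = f' s"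
proof -
  have "((\<lambda>r. f (r + 1)) has_vector_derivative f' (s + 1)) (at s)"
    by (rule hvd_shift) (rule d)
  then have "(f has_vector_derivative f' (s + 1)) (at s)" using p by simp
  with d show ?thesis using vector_derivative_unique_at by blast
qed

lemma periodic_int:
  fixes s :: real
  assumes p: "\<And>s. f (s + 1) = f s"
  shows "f (s + real_of_int n) = f s"
proof -
  have pn: "f (s + real m) = f s" for s m
  proof (induction m)
    case (Suc m)
    have "f (s + real (Suc m)) = f ((s + real m) + 1)" by (simp add: algebra_simps)
    also have "\<dots> = f s" using p Suc by simp
    finally show ?case .
  qed simp
  show ?thesis
  proof (cases "n \<ge> 0")
    case True then show ?thesis using pn[of s "nat n"] by simp
  next
    case False
    have "f (s + real_of_int n + real (nat (-n))) = f (s + real_of_int n)" by (rule pn)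
    with False show ?thesis by simp
  qed
qed

lemma periodic_reduce:
  fixes s :: real
  assumes p: "\<And>s. f (s + 1) = f s"
  shows "\<exists>y\<in>{0..1}. f y = f s"
proof -
  have "f (s - of_int (floor s) + of_int (floor s)) = f (s - of_int (floor s))"
    by (rule periodic_int[of f, OF p])
  then show ?thesis
    by (intro bexI[of _ "s - of_int (floor s)"]) (auto, linarith)
qed

lemma per_integral_zero:
  fixes g :: "real \<Rightarrow> 'b::banach"
  assumes "\<And>s. (g has_vector_derivative g' s) (at s)" "g 1 = g 0"
  shows "(g' has_integral 0) {0..1}"
  using fundamental_theorem_of_calculus[of 0 1 g g'] assms has_vector_derivative_at_within by fastforce

locale curve =
  fixes x T K K3 :: "real \<Rightarrow> 'a::euclidean_space" and \<sigma> \<sigma>1 \<sigma>2 :: "real \<Rightarrow> real"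
  assumes dx: "\<And>s. (x has_vector_derivative T s) (at s)"
    and dT: "\<And>s. (T has_vector_derivative K s) (at s)"
    and dK: "\<And>s. (K has_vector_derivative K3 s) (at s)"
    and cK3: "continuous_on UNIV K3"
    and ds: "\<And>s. (\<sigma> has_real_derivative \<sigma>1 s) (at s)"
    and ds1: "\<And>s. (\<sigma>1 has_real_derivative \<sigma>2 s) (at s)"
    and cs2: "continuous_on UNIV \<sigma>2"
    and px: "\<And>s. x (s + 1) = x s"
    and ps: "\<And>s. \<sigma> (s + 1) = \<sigma> s"
    and unit: "\<And>s. norm (T s) = 1"
    and tens: "\<And>s. \<sigma>2 s - \<sigma> s * (norm (K s))\<^sup>2 = -1"
begin

lemma ds': "(\<sigma> has_vector_derivative \<sigma>1 s) (at s)"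
  using ds has_real_derivative_iff_has_vector_derivative by blast
lemma ds1': "(\<sigma>1 has_vector_derivative \<sigma>2 s) (at s)"
  using ds1 has_real_derivative_iff_has_vector_derivative by blast

lemma pT: "T (s + 1) = T s" using deriv_periodic[OF dx px] .
lemma pK: "K (s + 1) = K s" using deriv_periodic[OF dT pT] .
lemma pK3: "K3 (s + 1) = K3 s" using deriv_periodic[OF dK pK] .
lemma ps1: "\<sigma>1 (s + 1) = \<sigma>1 s" using deriv_periodic[OF ds' ps] .
lemma ps2: "\<sigma>2 (s + 1) = \<sigma>2 s" using deriv_periodic[OF ds1' ps1] .

lemma cx: "continuous_on UNIV x"
  using dx by (auto intro!: continuous_at_imp_continuous_on has_vector_derivative_continuous)
lemma cT: "continuous_on UNIV T"
  using dT by (auto intro!: continuous_at_imp_continuous_on has_vector_derivative_continuous)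
lemma cK: "continuous_on UNIV K"
  using dK by (auto intro!: continuous_at_imp_continuous_on has_vector_derivative_continuous)
lemma cs: "continuous_on UNIV \<sigma>"
  using ds' by (auto intro!: continuous_at_imp_continuous_on has_vector_derivative_continuous)
lemma cs1: "continuous_on UNIV \<sigma>1"
  using ds1' by (auto intro!: continuous_at_imp_continuous_on has_vector_derivative_continuous)

lemma TT: "inner (T s) (T s) = 1"
  using unit[of s] by (simp add: norm_eq_sqrt_inner)

lemma TK: "inner (T s) (K s) = 0"
proof -
  have "((\<lambda>s. inner (T s) (T s)) has_vector_derivative (inner (T s) (K s) + inner (K s) (T s))) (at s)"
    by (rule hvd_inner[OF dT dT])
  moreover have "((\<lambda>s. inner (T s) (T s)) has_vector_derivative 0) (at s)"
    using TT by simp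
  ultimately have "inner (T s) (K s) + inner (K s) (T s) = 0"
    using vector_derivative_unique_at by blast
  then show ?thesis by (simp add: inner_commute)
qed

lemma TK3: "inner (T s) (K3 s) = - (norm (K s))\<^sup>2"
proof -
  have "((\<lambda>s. inner (T s) (K s)) has_vector_derivative (inner (T s) (K3 s) + inner (K s) (K s))) (at s)"
    by (rule hvd_inner[OF dT dK])
  moreover have "((\<lambda>s. inner (T s) (K s)) has_vector_derivative 0) (at s)"
    using TK by simp
  ultimately have "inner (T s) (K3 s) + inner (K s) (K s) = 0"
    using vector_derivative_unique_at by blast
  then show ?thesis by (simp add: power2_norm_eq_inner)
qed

definition "V s = \<sigma>1 s *\<^sub>R T s + \<sigma> s *\<^sub>R K s"
definition "V' s = \<sigma>2 s *\<^sub>R T s + (2 * \<sigma>1 s) *\<^sub>R K s + \<sigma> s *\<^sub>R K3 s"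
definition "W s = V s + x s"

lemma dsT: "((\<lambda>s. \<sigma> s *\<^sub>R T s) has_vector_derivative V s) (at s)"
  unfolding V_def using has_vector_derivative_scaleR[OF ds dT] by (simp add: add.commute)

lemma dV: "(V has_vector_derivative V' s) (at s)"
proof -
  have "((\<lambda>s. \<sigma>1 s *\<^sub>R T s + \<sigma> s *\<^sub>R K s) has_vector_derivative
      (\<sigma>1 s *\<^sub>R K s + \<sigma>2 s *\<^sub>R T s + (\<sigma> s *\<^sub>R K3 s + \<sigma>1 s *\<^sub>R K s))) (at s)"
    by (intro has_vector_derivative_add has_vector_derivative_scaleR ds ds1 dT dK)
  moreover have "\<sigma>1 s *\<^sub>R K s + \<sigma>2 s *\<^sub>R T s + (\<sigma> s *\<^sub>R K3 s + \<sigma>1 s *\<^sub>R K s) = V' s"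
    unfolding V'_def by (simp add: scaleR_left_distrib[symmetric] algebra_simps)
  ultimately show ?thesis unfolding V_def[abs_def] by simp
qed

lemma dW: "(W has_vector_derivative (V' s + T s)) (at s)"
  unfolding W_def[abs_def] by (intro has_vector_derivative_add dV dx)

lemma TV': "inner (T s) (V' s) = -1"
  using TT[of s] TK[of s] TK3[of s] tens[of s]
  by (simp add: V'_def inner_add_right inner_scaleR_right algebra_simps)

lemma TW': "inner (T s) (V' s + T s) = 0"
  using TV'[of s] TT[of s] by (simp add: inner_add_right)

lemma pV: "V (s + 1) = V s" by (simp add: V_def pT pK ps ps1)
lemma pW: "W (s + 1) = W s" by (simp add: W_def pV px)
lemma pV': "V' (s + 1) = V' s" by (simp add: V'_def pT pK pK3 ps ps1 ps2)

lemma cV: "continuous_on UNIV V"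
  using dV by (auto intro!: continuous_at_imp_continuous_on has_vector_derivative_continuous)
lemma cW: "continuous_on UNIV W"
  using dW by (auto intro!: continuous_at_imp_continuous_on has_vector_derivative_continuous)
lemma cV': "continuous_on UNIV V'"
  unfolding V'_def[abs_def] by (intro continuous_intros cs2 cT cs1 cK cs cK3)

lemma int_c: fixes f :: "real \<Rightarrow> 'b::banach" shows "continuous_on UNIV f \<Longrightarrow> f integrable_on {0..1::real}"
  by (rule integrable_continuous_interval, rule continuous_on_subset, assumption, simp)

lemma int_sq: fixes f :: "real \<Rightarrow> 'b::euclidean_space"
  assumes "continuous_on UNIV f"
  shows "((\<lambda>s. (norm (f s))\<^sup>2) has_integral integral {0..1} (\<lambda>s. (norm (f s))\<^sup>2)) {0..1}"
proof -
  have "continuous_on UNIV (\<lambda>s. (norm (f s))\<^sup>2)"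
    by (intro continuous_on_power continuous_on_norm assms)
  from int_c[OF this] show ?thesis by (simp add: has_integral_integral)
qed

lemma xV: "((\<lambda>s. inner (x s) (V s)) has_integral - integral {0..1} \<sigma>) {0..1}"
proof -
  have d: "((\<lambda>s. inner (x s) (\<sigma> s *\<^sub>R T s)) has_vector_derivative
       (inner (x s) (V s) + \<sigma> s)) (at s)" for s
    using hvd_inner[OF dx dsT, of s] TT[of s] by (simp add: inner_commute)
  have "((\<lambda>s. inner (x s) (V s) + \<sigma> s) has_integral 0) {0..1}"
    by (rule per_integral_zero[OF d]) (metis add_0 px ps pT)
  moreover have "(\<sigma> has_integral integral {0..1} \<sigma>) {0..1}"
    using int_c[OF cs] by (simp add: has_integral_integral)
  ultimately have "((\<lambda>s. (inner (x s) (V s) + \<sigma> s) - \<sigma> s) has_integral 0 - integral {0..1} \<sigma>) {0..1}"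
    by (rule has_integral_diff)
  then show ?thesis by simp
qed

lemma VW: "((\<lambda>s. inner (V s) (W s)) has_integral 0) {0..1}"
proof -
  have d: "((\<lambda>s. inner (\<sigma> s *\<^sub>R T s) (W s)) has_vector_derivative
       (inner (V s) (W s))) (at s)" for s
    using hvd_inner[OF dsT dW, of s] TW'[of s] by (simp add: inner_commute)
  show ?thesis
    by (rule per_integral_zero[OF d]) (metis add_0 ps pT pW)
qed

lemma xW: "integral {0..1} (\<lambda>s. inner (x s) (W s)) = integral {0..1} (\<lambda>s. (norm (x s))\<^sup>2) - integral {0..1} \<sigma>"
proof -
  have "((\<lambda>s. (norm (x s))\<^sup>2) has_integral integral {0..1} (\<lambda>s. (norm (x s))\<^sup>2)) {0..1}"
    by (rule int_sq[OF cx])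
  from has_integral_add[OF xV this] show ?thesis
    by (intro integral_unique) (simp add: W_def inner_add_right power2_norm_eq_inner)
qed

lemma xW_nonneg: "integral {0..1} (\<lambda>s. inner (x s) (W s)) \<ge> 0"
proof -
  have i: "((\<lambda>s. (norm (W s))\<^sup>2) has_integral integral {0..1} (\<lambda>s. (norm (W s))\<^sup>2)) {0..1}"
    by (rule int_sq[OF cW])
  from has_integral_diff[OF i VW]
  have "((\<lambda>s. inner (x s) (W s)) has_integral integral {0..1} (\<lambda>s. (norm (W s))\<^sup>2)) {0..1}"
    by (simp add: W_def inner_add_left power2_norm_eq_inner inner_commute algebra_simps)
  moreover have "integral {0..1} (\<lambda>s. (norm (W s))\<^sup>2) \<ge> 0"
    by (rule integral_nonneg) (use i in auto)
  ultimately show ?thesis by (simp add: integral_unique)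
qed

lemma sigma_le: "integral {0..1} \<sigma> \<le> integral {0..1} (\<lambda>s. (norm (x s))\<^sup>2)"
  using xW xW_nonneg by linarith

end

context curve begin

lemma sigma_pos: "\<sigma> s > 0"
proof -
  obtain m where m: "m \<in> {0..1}" and mmin: "\<forall>y\<in>{0..1}. \<sigma> m \<le> \<sigma> y"
    using continuous_attains_inf[of "{0..1::real}" \<sigma>] continuous_on_subset[OF cs, of "{0..1}"]
    by auto
  have glob: "\<sigma> m \<le> \<sigma> y" for y
    using periodic_reduce[of \<sigma> y, OF ps] mmin by auto
  have s1: "\<sigma>1 m = 0"
    using DERIV_local_min[OF ds[of m], of 1] glob by auto
  have s2: "\<sigma>2 m \<ge> 0"
  proof (rule ccontr)
    assume "\<not> ?thesis"
    then obtain d where d: "d > 0" and dd: "\<forall>h>0. h < d \<longrightarrow> \<sigma>1 m > \<sigma>1 (m + h)"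
      using DERIV_neg_dec_right[OF ds1, of m] by auto
    obtain z where z: "m < z" "z < m + d/2" and eq: "\<sigma> (m + d/2) - \<sigma> m = (m + d/2 - m) * \<sigma>1 z"
      using MVT2[of m "m + d/2" \<sigma> \<sigma>1] ds d by auto
    have "\<sigma>1 z < 0" using dd[rule_format, of "z - m"] z s1 by auto
    then have "\<sigma> (m + d/2) < \<sigma> m" using eq d mult_pos_neg[of d "\<sigma>1 z"] by simp
    with glob show False by (meson not_le)
  qed
  have "\<sigma> m * (norm (K m))\<^sup>2 \<ge> 1" using tens[of m] s2 by linarith
  then have "\<sigma> m > 0"
    by (metis not_le mult_nonpos_nonneg zero_le_power2 zero_less_one order.strict_trans2)
  with glob show ?thesis by (meson less_le_trans)
qed

lemma Bprime_nonneg: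
  "inner ((2 * \<sigma> s * \<sigma>1 s) *\<^sub>R K s + (\<sigma> s)\<^sup>2 *\<^sub>R K3 s) (V' s + T s) \<ge> 0"
proof -
  have eq: "(2 * \<sigma> s * \<sigma>1 s) *\<^sub>R K s + (\<sigma> s)\<^sup>2 *\<^sub>R K3 s = \<sigma> s *\<^sub>R (V' s - \<sigma>2 s *\<^sub>R T s)"
    by (simp add: V'_def algebra_simps power2_eq_square)
  have cs: "\<bar>inner (V' s) (T s)\<bar> \<le> norm (V' s)"
    using Cauchy_Schwarz_ineq2[of "V' s" "T s"] unit[of s] by simp
  then have "norm (V' s) \<ge> 1" using TV'[of s] by (simp add: inner_commute)
  then have n: "(norm (V' s))\<^sup>2 \<ge> 1" by (simp add: one_le_power)
  have "inner (V' s - \<sigma>2 s *\<^sub>R T s) (V' s + T s) = (norm (V' s))\<^sup>2 - 1"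
    using TW'[of s] TV'[of s] TT[of s]
    by (simp add: inner_diff_left inner_add_right inner_add_left inner_diff_right power2_norm_eq_inner inner_commute)
  then show ?thesis using eq n sigma_pos[of s] by simp
qed

end

lemma intI: fixes f :: "real \<Rightarrow> 'b::banach"
  shows "continuous_on UNIV f \<Longrightarrow> f integrable_on {a..b}"
  by (rule integrable_continuous_interval, rule continuous_on_subset, assumption, simp)

lemma hasI: fixes f :: "real \<Rightarrow> 'b::banach"
  shows "continuous_on UNIV f \<Longrightarrow> (f has_integral integral {a..b} f) {a..b}"
  using intI by (simp add: has_integral_integral)

lemma dirichlet_c:
  fixes g g' :: "real \<Rightarrow> real" and a c :: real
  assumes dg: "\<And>s. (g has_real_derivative g' s) (at s)"
    and cg': "continuous_on UNIV g'"
    and g0: "g a = 0" and g1: "g (a + 1/2) = 0"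
    and c: "0 < c" "c < 2 * pi"
  shows "c\<^sup>2 * integral {a..a+1/2} (\<lambda>s. (g s)\<^sup>2) \<le> integral {a..a+1/2} (\<lambda>s. (g' s)\<^sup>2)"
proof -
  define u where "u s = c * (s - a - 1/4)" for s
  define \<phi> where "\<phi> s = - c * tan (u s)" for s
  define h' where "h' s = (- c * c * (1 + (tan (u s))\<^sup>2)) * (g s)\<^sup>2 + \<phi> s * (2 * g s * g' s)" for s
  have cg: "continuous_on UNIV g"
    using dg by (auto intro!: continuous_at_imp_continuous_on DERIV_isCont)
  have cos_pos: "cos (u s) > 0" if "s \<in> {a..a+1/2}" for s
  proof -
    have "\<bar>u s\<bar> \<le> c * (1/4)"
      proof -
      have "\<bar>s - a - 1/4\<bar> \<le> 1/4" using that unfolding atLeastAtMost_iff by linarith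
      then show ?thesis using c unfolding u_def by (simp add: abs_mult mult_left_mono)
    qed
    also have "\<dots> < pi / 2" using c by simp
    finally show ?thesis by (intro cos_gt_zero_pi) auto
  qed
  have dh: "((\<lambda>s. \<phi> s * (g s)\<^sup>2) has_real_derivative h' s) (at s)" if "s \<in> {a..a+1/2}" for s
  proof -
    have cz: "cos (u s) \<noteq> 0" using cos_pos[OF that] by simp
    have du: "(u has_real_derivative c) (at s)"
      unfolding u_def[abs_def] by (auto intro!: derivative_eq_intros)
    have dt: "((\<lambda>s. tan (u s)) has_real_derivative (inverse ((cos (u s))\<^sup>2) * c)) (at s)"
      by (rule DERIV_chain2[OF DERIV_tan[OF cz] du])
    have "((\<lambda>s. - c * tan (u s) * (g s)\<^sup>2) has_real_derivative
        (- c * (inverse ((cos (u s))\<^sup>2) * c)) * (g s)\<^sup>2 + (- c * tan (u s)) * (2 * g s * g' s)) (at s)"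
      using cz du by (auto intro!: derivative_eq_intros dg simp: power2_eq_square)
    moreover have "inverse ((cos (u s))\<^sup>2) = 1 + (tan (u s))\<^sup>2"
      using tan_sec[OF cz] by (simp add: power_inverse)
    ultimately show ?thesis unfolding h'_def \<phi>_def by (simp add: algebra_simps)
  qed
  have int_h': "(h' has_integral 0) {a..a+1/2}"
  proof -
    have "(h' has_integral (\<phi> (a+1/2) * (g (a+1/2))\<^sup>2 - \<phi> a * (g a)\<^sup>2)) {a..a+1/2}"
      by (rule fundamental_theorem_of_calculus)
         (auto intro!: DERIV_subset[OF dh] simp: has_real_derivative_iff_has_vector_derivative[symmetric])
    then show ?thesis using g0 g1 by simp
  qed
  define I where "I = integral {a..a+1/2} (\<lambda>s. (g s)\<^sup>2)"
  define J where "J = integral {a..a+1/2} (\<lambda>s. (g' s)\<^sup>2)"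
  have iI: "((\<lambda>s. (g s)\<^sup>2) has_integral I) {a..a+1/2}"
    unfolding I_def by (rule hasI) (intro continuous_intros cg)
  have iJ: "((\<lambda>s. (g' s)\<^sup>2) has_integral J) {a..a+1/2}"
    unfolding J_def by (rule hasI) (intro continuous_intros cg')
  have "((\<lambda>s. (g' s)\<^sup>2 - h' s - c\<^sup>2 * (g s)\<^sup>2) has_integral (J - 0 - c\<^sup>2 * I)) {a..a+1/2}"
    by (intro has_integral_diff iJ int_h' has_integral_mult_right iI)
  then have "((\<lambda>s. (g' s - \<phi> s * g s)\<^sup>2) has_integral (J - 0 - c\<^sup>2 * I)) {a..a+1/2}"
  proof (rule has_integral_eq[rotated])
    fix s assume "s \<in> {a..a+1/2}"
    show "(g' s)\<^sup>2 - h' s - c\<^sup>2 * (g s)\<^sup>2 = (g' s - \<phi> s * g s)\<^sup>2"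
      unfolding h'_def \<phi>_def by (simp add: power2_eq_square algebra_simps)
  qed
  then have "0 \<le> J - 0 - c\<^sup>2 * I" by (rule has_integral_nonneg) simp
  then show ?thesis unfolding I_def J_def by simp
qed

lemma dirichlet:
  fixes g g' :: "real \<Rightarrow> real" and a :: real
  assumes dg: "\<And>s. (g has_real_derivative g' s) (at s)"
    and cg': "continuous_on UNIV g'"
    and g0: "g a = 0" and g1: "g (a + 1/2) = 0"
  shows "(2 * pi)\<^sup>2 * integral {a..a+1/2} (\<lambda>s. (g s)\<^sup>2) \<le> integral {a..a+1/2} (\<lambda>s. (g' s)\<^sup>2)"
proof -
  define I where "I = integral {a..a+1/2} (\<lambda>s. (g s)\<^sup>2)"
  have "((\<lambda>c. c\<^sup>2 * I) \<longlongrightarrow> (2 * pi)\<^sup>2 * I) (at_left (2 * pi))"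
    by (intro tendsto_intros)
  moreover have "\<forall>\<^sub>F c in at_left (2 * pi). c\<^sup>2 * I \<le> integral {a..a+1/2} (\<lambda>s. (g' s)\<^sup>2)"
    unfolding eventually_at_left[OF pi_gt_zero[THEN mult_pos_pos[OF zero_less_numeral]]] 
    apply (rule exI[of _ 0])
    using dirichlet_c[OF dg cg' g0 g1] unfolding I_def
    by (auto simp: pi_gt_zero)
  ultimately show ?thesis unfolding I_def[symmetric]
    by (intro tendsto_le[OF _ tendsto_const]) auto
qed

lemma split_half:
  fixes h :: "real \<Rightarrow> real"
  assumes ch: "continuous_on UNIV h"
  shows "integral {0..1} h = integral {0..1/2} (\<lambda>s. h s + h (s + 1/2))"
proof -
  have "integral {0..1/2} h + integral {1/2..1} h = integral {0..1} h"
    using Henstock_Kurzweil_Integration.integral_combine[where a=0 and c="1/2" and b=1 and f=h] intI[OF ch] by auto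
  moreover have "integral {0..1/2} (\<lambda>x. h (x + 1/2)) = integral {0 + 1/2..1/2 + 1/2} h"
    by (rule integral_shift[unfolded o_def]) (rule continuous_on_subset[OF ch], simp)
  moreover have "integral {0..1/2} (\<lambda>s. h s + h (s + 1/2)) = integral {0..1/2} h + integral {0..1/2} (\<lambda>x. h (x + 1/2))"
    by (rule Henstock_Kurzweil_Integration.integral_add) (auto intro!: intI ch continuous_on_compose[of UNIV "\<lambda>x. x + 1/2" h, unfolded o_def] 
        continuous_intros intro: continuous_on_subset simp: o_def)
  ultimately show ?thesis by simp
qed

lemma shift_period:
  fixes h :: "real \<Rightarrow> real"
  assumes ch: "continuous_on UNIV h" and ph: "\<And>s. h (s + P) = h s" and a: "0 \<le> a" "a \<le> P"
  shows "integral {a..a+P} h = integral {0..P} h"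
proof -
  have "integral {a..P} h + integral {P..a+P} h = integral {a..a+P} h"
    using Henstock_Kurzweil_Integration.integral_combine[where a=a and c=P and b="a+P" and f=h] intI[OF ch] a by auto
  moreover have "integral {0..a} (h \<circ> (\<lambda>x. x + P)) = integral {0 + P..a + P} h"
    by (rule integral_shift) (rule continuous_on_subset[OF ch], simp)
  moreover have "h \<circ> (\<lambda>x. x + P) = h" using ph by (auto simp: o_def)
  moreover have "integral {0..a} h + integral {a..P} h = integral {0..P} h"
    by (intro Henstock_Kurzweil_Integration.integral_combine intI ch) (use a in auto)
  ultimately show ?thesis by simp
qed

lemma zero_of_mean:
  fixes p :: "real \<Rightarrow> real"
  assumes cp: "continuous_on UNIV p" and m: "integral {0..1/2} p = 0"
  shows "\<exists>b\<in>{0..1/2}. p b = 0"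
proof -
  define G where "G u = integral {0..u} p" for u
  have dG: "(G has_vector_derivative p x) (at x within {0..1/2})" if "x \<in> {0..1/2}" for x
    unfolding G_def[abs_def] by (rule integral_has_vector_derivative[OF continuous_on_subset[OF cp]]) (use that in auto)
  have cG: "continuous_on {0..1/2} G"
    using has_vector_derivative_continuous[OF dG] by (auto simp: continuous_on_eq_continuous_within)
  have dG': "(G has_derivative (\<lambda>v. v * p x)) (at x)" if "0 < x" "x < 1/2" for x
  proof -
    have "at x within {0..1/2} = at x"
      by (rule at_within_interior) (use that in auto)
    with dG[of x] that show ?thesis
      by (auto simp: has_vector_derivative_def mult.commute)
  qed
  obtain z where z: "0 < z" "z < 1/2" and "(\<lambda>v. v * p z) = (\<lambda>v. 0)"
    using Rolle_deriv[of 0 "1/2" G "\<lambda>x v. v * p x", OF _ _ cG dG'] m by (auto simp: G_def)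
  then have "p z = 0" by (metis mult_1)
  with z show ?thesis by auto
qed

lemma wirtinger:
  fixes f f' :: "real \<Rightarrow> real"
  assumes df: "\<And>s. (f has_real_derivative f' s) (at s)"
    and cf': "continuous_on UNIV f'"
    and pf: "\<And>s. f (s + 1) = f s"
    and mean: "integral {0..1} f = 0"
  shows "4 * pi\<^sup>2 * integral {0..1} (\<lambda>s. (f s)\<^sup>2) \<le> integral {0..1} (\<lambda>s. (f' s)\<^sup>2)"
proof -
  have cf: "continuous_on UNIV f"
    using df by (auto intro!: continuous_at_imp_continuous_on DERIV_isCont)
  have df': "(f has_vector_derivative f' s) (at s)" for s
    using df has_real_derivative_iff_has_vector_derivative by blast
  have pf': "f' (s + 1) = f' s" for s using deriv_periodic[OF df' pf] .
  define p where "p s = (f s + f (s + 1/2)) / 2" for s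
  define q where "q s = (f s - f (s + 1/2)) / 2" for s
  define p' where "p' s = (f' s + f' (s + 1/2)) / 2" for s
  define q' where "q' s = (f' s - f' (s + 1/2)) / 2" for s
  have dsh: "((\<lambda>s. f (s + 1/2)) has_real_derivative f' (s + 1/2)) (at s)" for s
    using df[of "s + 1/2"] DERIV_shift by blast
  have dp: "(p has_real_derivative p' s) (at s)" for s
    unfolding p_def[abs_def] p'_def by (auto intro!: derivative_eq_intros df dsh)
  have dq: "(q has_real_derivative q' s) (at s)" for s
    unfolding q_def[abs_def] q'_def by (auto intro!: derivative_eq_intros df dsh)
  have csh: "continuous_on UNIV (\<lambda>s. g (s + c))" if "continuous_on UNIV g" for g :: "real \<Rightarrow> real" and c
    by (rule continuous_on_compose2[OF that]) (auto intro!: continuous_intros)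
  have cfs: "continuous_on UNIV (\<lambda>s. f (s + 1/2))" by (rule csh[OF cf])
  have cfs': "continuous_on UNIV (\<lambda>s. f' (s + 1/2))" by (rule csh[OF cf'])
  have cp: "continuous_on UNIV p" unfolding p_def[abs_def] by (intro continuous_intros cf cfs) auto
  have cq: "continuous_on UNIV q" unfolding q_def[abs_def] by (intro continuous_intros cf cfs) auto
  have cp': "continuous_on UNIV p'" unfolding p'_def[abs_def] by (intro continuous_intros cf' cfs') auto
  have cq': "continuous_on UNIV q'" unfolding q'_def[abs_def] by (intro continuous_intros cf' cfs') auto
  have f_split: "integral {0..1} (\<lambda>s. (f s)\<^sup>2) = 2 * integral {0..1/2} (\<lambda>s. (p s)\<^sup>2) + 2 * integral {0..1/2} (\<lambda>s. (q s)\<^sup>2)"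
  proof -
    have "integral {0..1} (\<lambda>s. (f s)\<^sup>2) = integral {0..1/2} (\<lambda>s. (f s)\<^sup>2 + (f (s + 1/2))\<^sup>2)"
      by (rule split_half) (intro continuous_intros cf)
    also have "\<dots> = integral {0..1/2} (\<lambda>s. 2 * (p s)\<^sup>2 + 2 * (q s)\<^sup>2)"
      by (intro Henstock_Kurzweil_Integration.integral_cong) (simp add: p_def q_def power2_eq_square divide_simps, simp add: algebra_simps)
    also have "\<dots> = 2 * integral {0..1/2} (\<lambda>s. (p s)\<^sup>2) + 2 * integral {0..1/2} (\<lambda>s. (q s)\<^sup>2)"
      by (subst Henstock_Kurzweil_Integration.integral_add) (auto intro!: intI continuous_intros cp cq)
    finally show ?thesis .
  qed
  have f'_split: "integral {0..1} (\<lambda>s. (f' s)\<^sup>2) = 2 * integral {0..1/2} (\<lambda>s. (p' s)\<^sup>2) + 2 * integral {0..1/2} (\<lambda>s. (q' s)\<^sup>2)"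
  proof -
    have "integral {0..1} (\<lambda>s. (f' s)\<^sup>2) = integral {0..1/2} (\<lambda>s. (f' s)\<^sup>2 + (f' (s + 1/2))\<^sup>2)"
      by (rule split_half) (intro continuous_intros cf')
    also have "\<dots> = integral {0..1/2} (\<lambda>s. 2 * (p' s)\<^sup>2 + 2 * (q' s)\<^sup>2)"
      by (intro Henstock_Kurzweil_Integration.integral_cong) (simp add: p'_def q'_def power2_eq_square divide_simps, simp add: algebra_simps)
    also have "\<dots> = 2 * integral {0..1/2} (\<lambda>s. (p' s)\<^sup>2) + 2 * integral {0..1/2} (\<lambda>s. (q' s)\<^sup>2)"
      by (subst Henstock_Kurzweil_Integration.integral_add) (auto intro!: intI continuous_intros cp' cq')
    finally show ?thesis .
  qed
  have half: "s + 1/2 + 1/2 = s + 1" for s :: real by simp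
  have pp: "p (s + 1/2) = p s" for s unfolding p_def half pf by simp
  have pq: "q (s + 1/2) = - q s" for s unfolding q_def half pf by (simp add: field_simps)
  have pp': "p' (s + 1/2) = p' s" for s unfolding p'_def half pf' by simp
  have pq': "q' (s + 1/2) = - q' s" for s unfolding q'_def half pf' by (simp add: field_simps)
  obtain a where a: "a \<in> {0..1/2}" "q a = 0"
  proof -
    have q12: "q (1/2) = - q 0" using pq[of 0] by simp
    have "\<exists>x. 0 \<le> x \<and> x \<le> 1/2 \<and> q x = 0"
    proof (cases "q 0 \<le> 0")
      case True
      then show ?thesis by (intro IVT'[of q]) (auto simp: q12 intro: continuous_on_subset[OF cq])
    next
      case False
      then show ?thesis by (intro IVT2'[of q]) (auto simp: q12 intro: continuous_on_subset[OF cq])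
    qed
    then show ?thesis using that by auto
  qed
  have qa1: "q (a + 1/2) = 0" using pq[of a] a by simp
  have "integral {0..1/2} p = 0"
  proof -
    have "integral {0..1} f = integral {0..1/2} (\<lambda>s. f s + f (s + 1/2))"
      by (rule split_half[OF cf])
    also have "\<dots> = integral {0..1/2} (\<lambda>s. 2 * p s)"
      by (intro Henstock_Kurzweil_Integration.integral_cong) (simp add: p_def)
    also have "\<dots> = 2 * integral {0..1/2} p" by (rule integral_mult_right)
    finally show ?thesis using mean by simp
  qed
  then obtain b where b: "b \<in> {0..1/2}" "p b = 0" using zero_of_mean[OF cp] by blast
  have pb1: "p (b + 1/2) = 0" using pp[of b] b by simp
  have Dq: "(2 * pi)\<^sup>2 * integral {a..a+1/2} (\<lambda>s. (q s)\<^sup>2) \<le> integral {a..a+1/2} (\<lambda>s. (q' s)\<^sup>2)"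
    by (rule dirichlet[OF dq cq' a(2) qa1])
  have Dp: "(2 * pi)\<^sup>2 * integral {b..b+1/2} (\<lambda>s. (p s)\<^sup>2) \<le> integral {b..b+1/2} (\<lambda>s. (p' s)\<^sup>2)"
    by (rule dirichlet[OF dp cp' b(2) pb1])
  have s1: "integral {a..a+1/2} (\<lambda>s. (q s)\<^sup>2) = integral {0..1/2} (\<lambda>s. (q s)\<^sup>2)"
    by (rule shift_period) (use a pq in \<open>auto intro!: continuous_intros cq\<close>)
  have s2: "integral {a..a+1/2} (\<lambda>s. (q' s)\<^sup>2) = integral {0..1/2} (\<lambda>s. (q' s)\<^sup>2)"
    by (rule shift_period) (use a pq' in \<open>auto intro!: continuous_intros cq'\<close>)
  have s3: "integral {b..b+1/2} (\<lambda>s. (p s)\<^sup>2) = integral {0..1/2} (\<lambda>s. (p s)\<^sup>2)"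
    by (rule shift_period) (use b pp in \<open>auto intro!: continuous_intros cp\<close>)
  have s4: "integral {b..b+1/2} (\<lambda>s. (p' s)\<^sup>2) = integral {0..1/2} (\<lambda>s. (p' s)\<^sup>2)"
    by (rule shift_period) (use b pp' in \<open>auto intro!: continuous_intros cp'\<close>)
  have "(2 * pi)\<^sup>2 = 4 * pi\<^sup>2" by (simp add: power2_eq_square)
  then show ?thesis using Dq Dp s1 s2 s3 s4 f_split f'_split by (simp add: algebra_simps)
qed

context curve begin

lemma norm_sq_sum: "(norm v)\<^sup>2 = (\<Sum>b\<in>Basis. (inner v b)\<^sup>2)" for v :: 'a
proof -
  have "(norm v)\<^sup>2 = inner v v" by (rule power2_norm_eq_inner)
  also have "\<dots> = (\<Sum>b\<in>Basis. inner v b * inner v b)" by (rule euclidean_inner)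
  finally show ?thesis by (simp only: power2_eq_square)
qed

lemma wirt_vec:
  assumes m: "integral {0..1} x = 0"
  shows "integral {0..1} (\<lambda>s. (norm (x s))\<^sup>2) \<le> 1 / (4 * pi\<^sup>2)"
proof -
  have comp: "4 * pi\<^sup>2 * integral {0..1} (\<lambda>s. (inner (x s) b)\<^sup>2) \<le> integral {0..1} (\<lambda>s. (inner (T s) b)\<^sup>2)"
    if b: "b \<in> Basis" for b
  proof (rule wirtinger)
    show "((\<lambda>s. inner (x s) b) has_real_derivative inner (T s) b) (at s)" for s
      using hvd_inner[OF dx[of s] has_vector_derivative_const[of b]]
      by (simp add: has_real_derivative_iff_has_vector_derivative)
    show "continuous_on UNIV (\<lambda>s. inner (T s) b)" by (intro continuous_intros cT)
    show "inner (x (s + 1)) b = inner (x s) b" for s by (simp add: px)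
    have "((\<lambda>v. inner v b) \<circ> x has_integral inner (integral {0..1} x) b) {0..1}"
      by (rule has_integral_linear[OF _ bounded_linear_inner_left]) (rule int_c[OF cx, THEN integrable_integral])
    then show "integral {0..1} (\<lambda>s. inner (x s) b) = 0" using m by (simp add: o_def integral_unique)
  qed
  have ix: "integral {0..1} (\<lambda>s. (norm (x s))\<^sup>2) = (\<Sum>b\<in>Basis. integral {0..1} (\<lambda>s. (inner (x s) b)\<^sup>2))"
    unfolding norm_sq_sum
    by (rule Henstock_Kurzweil_Integration.integral_sum) (auto intro!: int_c continuous_intros cx)
  have iT: "(\<Sum>b\<in>Basis. integral {0..1} (\<lambda>s. (inner (T s) b)\<^sup>2)) = integral {0..1} (\<lambda>s. (norm (T s))\<^sup>2)"
    unfolding norm_sq_sum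
    by (rule Henstock_Kurzweil_Integration.integral_sum[symmetric]) (auto intro!: int_c continuous_intros cT)
  have "integral {0..1} (\<lambda>s. (norm (T s))\<^sup>2) = 1" by (simp add: unit)
  then have "4 * pi\<^sup>2 * integral {0..1} (\<lambda>s. (norm (x s))\<^sup>2) \<le> 1"
  proof -
    have "(\<Sum>b\<in>Basis. 4 * pi\<^sup>2 * integral {0..1} (\<lambda>s. (inner (x s) b)\<^sup>2)) \<le> (\<Sum>b\<in>Basis. integral {0..1} (\<lambda>s. (inner (T s) b)\<^sup>2))"
      by (rule sum_mono) (rule comp)
    then show ?thesis using iT ix \<open>integral {0..1} (\<lambda>s. (norm (T s))\<^sup>2) = 1\<close> by (simp add: sum_distrib_left)
  qed
  moreover have pos: "0 < 4 * pi\<^sup>2" by simp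
  ultimately show ?thesis by (subst pos_le_divide_eq[OF pos]) (simp add: mult.commute)
qed

end

context curve begin

lemma dWe: "((\<lambda>s. \<sigma>1 s *\<^sub>R T s + \<sigma> s *\<^sub>R K s + x s) has_vector_derivative
    (\<sigma>2 s *\<^sub>R T s + (2 * \<sigma>1 s) *\<^sub>R K s + \<sigma> s *\<^sub>R K3 s + T s)) (at s)"
  using dW[of s] unfolding W_def[abs_def] V_def[abs_def] V'_def by simp

lemma xWe: "integral {0..1} (\<lambda>s. inner (x s) (\<sigma>1 s *\<^sub>R T s + \<sigma> s *\<^sub>R K s + x s))
    = integral {0..1} (\<lambda>s. (norm (x s))\<^sup>2) - integral {0..1} \<sigma>"
  using xW unfolding W_def[abs_def] V_def[abs_def] by simp

lemma pWe': "(\<lambda>s. \<sigma>2 s *\<^sub>R T s + (2 * \<sigma>1 s) *\<^sub>R K s + \<sigma> s *\<^sub>R K3 s + T s) (s + 1)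
   = (\<lambda>s. \<sigma>2 s *\<^sub>R T s + (2 * \<sigma>1 s) *\<^sub>R K s + \<sigma> s *\<^sub>R K3 s + T s) s"
  using pV'[of s] pT[of s] unfolding V'_def by simp

lemma dsK: "((\<lambda>s. (\<sigma> s)\<^sup>2 *\<^sub>R K s) has_vector_derivative ((2 * \<sigma> s * \<sigma>1 s) *\<^sub>R K s + (\<sigma> s)\<^sup>2 *\<^sub>R K3 s)) (at s)"
proof -
  have "((\<lambda>s. (\<sigma> s)\<^sup>2) has_real_derivative (2 * \<sigma> s * \<sigma>1 s)) (at s)"
    by (auto intro!: derivative_eq_intros ds)
  from has_vector_derivative_scaleR[OF this dK[of s]] show ?thesis by (simp add: add.commute)
qed

lemma Bp_int:
  assumes dY: "\<And>s. (Y has_vector_derivative Y' s) (at s)"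
    and Ye: "\<And>s. Y s = \<sigma>2 s *\<^sub>R T s + (2 * \<sigma>1 s) *\<^sub>R K s + \<sigma> s *\<^sub>R K3 s + T s"
    and cY': "continuous_on UNIV Y'"
  shows "integral {0..1} (\<lambda>s. inner ((\<sigma> s)\<^sup>2 *\<^sub>R K s) (Y' s)) \<le> 0"
proof -
  have cY: "continuous_on UNIV Y"
    using dY by (auto intro!: continuous_at_imp_continuous_on has_vector_derivative_continuous)
  have pY: "Y 1 = Y 0" using pWe'[of 0] Ye by simp
  have d: "((\<lambda>s. inner ((\<sigma> s)\<^sup>2 *\<^sub>R K s) (Y s)) has_vector_derivative
      (inner ((\<sigma> s)\<^sup>2 *\<^sub>R K s) (Y' s) + inner ((2 * \<sigma> s * \<sigma>1 s) *\<^sub>R K s + (\<sigma> s)\<^sup>2 *\<^sub>R K3 s) (Y s))) (at s)" for s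
    by (rule hvd_inner[OF dsK dY])
  have z: "((\<lambda>s. inner ((\<sigma> s)\<^sup>2 *\<^sub>R K s) (Y' s) + inner ((2 * \<sigma> s * \<sigma>1 s) *\<^sub>R K s + (\<sigma> s)\<^sup>2 *\<^sub>R K3 s) (Y s)) has_integral 0) {0..1}"
    by (rule per_integral_zero[OF d]) (use ps[of 0] pK[of 0] pY in simp)
  define Q where "Q s = inner ((2 * \<sigma> s * \<sigma>1 s) *\<^sub>R K s + (\<sigma> s)\<^sup>2 *\<^sub>R K3 s) (Y s)" for s
  have cQ: "continuous_on UNIV Q" unfolding Q_def[abs_def]
    by (intro continuous_intros cs cs1 cK cK3 cY)
  have iQ: "(Q has_integral integral {0..1} Q) {0..1}" by (rule hasI[OF cQ])
  have Qnn: "integral {0..1} Q \<ge> 0"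
    by (rule integral_nonneg[OF int_c[OF cQ]]) (simp add: Q_def Ye Bprime_nonneg[unfolded V'_def])
  from has_integral_diff[OF z iQ] have "((\<lambda>s. inner ((\<sigma> s)\<^sup>2 *\<^sub>R K s) (Y' s)) has_integral - integral {0..1} Q) {0..1}"
    by (simp add: Q_def)
  then show ?thesis using Qnn by (simp add: integral_unique)
qed

end

lemma Cinf_D:
  assumes "Cinf_on S f"
  shows "\<exists>ft fs. (\<forall>z\<in>S. (f has_derivative (\<lambda>(h, k). h *\<^sub>R ft z + k *\<^sub>R fs z)) (at z within S))
           \<and> Cinf_on S ft \<and> Cinf_on S fs"
  using assms by (cases rule: Cinf_on.cases) blast

lemma Cinf_cont:
  assumes "Cinf_on S f" shows "continuous_on S f"
proof -
  obtain ft fs where d: "\<forall>z\<in>S. (f has_derivative (\<lambda>(h, k). h *\<^sub>R ft z + k *\<^sub>R fs z)) (at z within S)"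
    using Cinf_D[OF assms] by blast
  then show ?thesis
    by (auto simp: continuous_on_eq_continuous_within intro: has_derivative_continuous)
qed

definition "X = ({0..} \<times> UNIV :: (real \<times> real) set)"

lemma line_s:
  assumes d: "\<forall>z\<in>X. (f has_derivative (\<lambda>(h, k). h *\<^sub>R ft z + k *\<^sub>R fs z)) (at z within X)"
    and t: "t \<ge> 0"
  shows "((\<lambda>r. f (t, r)) has_vector_derivative fs (t, s)) (at s)"
proof -
  have p: "((\<lambda>r. (t, r)) has_derivative (\<lambda>k. (0, k))) (at s within UNIV)"
    by (auto intro!: derivative_eq_intros)
  have "((\<lambda>r. f (t, r)) has_derivative (\<lambda>k. (\<lambda>(h, k). h *\<^sub>R ft (t, s) + k *\<^sub>R fs (t, s)) (0, k))) (at s within UNIV)"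
    by (rule has_derivative_in_compose2[of X f _ "\<lambda>r. (t, r)" UNIV s]) (use d t p in \<open>auto simp: X_def\<close>)
  then show ?thesis by (simp add: has_vector_derivative_def)
qed

lemma line_t:
  assumes d: "\<forall>z\<in>X. (f has_derivative (\<lambda>(h, k). h *\<^sub>R ft z + k *\<^sub>R fs z)) (at z within X)"
    and t: "t \<ge> 0"
  shows "((\<lambda>u. f (u, s)) has_vector_derivative ft (t, s)) (at t within {0..})"
proof -
  have p: "((\<lambda>u. (u, s)) has_derivative (\<lambda>h. (h, 0))) (at t within {0..})"
    by (auto intro!: derivative_eq_intros)
  have "((\<lambda>u. f (u, s)) has_derivative (\<lambda>h. (\<lambda>(h, k). h *\<^sub>R ft (t, s) + k *\<^sub>R fs (t, s)) (h, 0))) (at t within {0..})"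
    by (rule has_derivative_in_compose2[of X f _ "\<lambda>u. (u, s)" "{0..}" t]) (use d t p in \<open>auto simp: X_def\<close>)
  then show ?thesis by (simp add: has_vector_derivative_def)
qed

lemma at_pos: "t > 0 \<Longrightarrow> at t within {0::real..} = at t"
  by (rule at_within_interior) (simp add: interior_Ici[of "-1"])

lemma line_t_at:
  assumes d: "\<forall>z\<in>X. (f has_derivative (\<lambda>(h, k). h *\<^sub>R ft z + k *\<^sub>R fs z)) (at z within X)"
    and t: "t > 0"
  shows "((\<lambda>u. f (u, s)) has_vector_derivative ft (t, s)) (at t)"
  using line_t[OF d, of t s] t at_pos[OF t] by simp

lemma cont_line_s:
  assumes "continuous_on X f" "t \<ge> 0"
  shows "continuous_on UNIV (\<lambda>r. f (t, r))"
  by (rule continuous_on_compose2[OF assms(1)]) (use assms(2) in \<open>auto intro!: continuous_intros simp: X_def\<close>)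

lemma unique_within_Ici:
  fixes t :: real
  assumes "t \<ge> 0" "(f has_vector_derivative a) (at t within {0..})" "(f has_vector_derivative b) (at t within {0..})"
  shows "a = b"
proof (rule vector_derivative_unique_within_closed_interval[of t "t+1" t f])
  show "(f has_vector_derivative a) (at t within cbox t (t + 1))"
    using assms by (auto intro: has_vector_derivative_within_subset)
  show "(f has_vector_derivative b) (at t within cbox t (t + 1))"
    using assms by (auto intro: has_vector_derivative_within_subset)
qed auto

lemma schwarz:
  fixes f ft fs fts fst :: "real \<times> real \<Rightarrow> 'b::euclidean_space"
  assumes ls: "\<And>t s. t > 0 \<Longrightarrow> ((\<lambda>r. f (t, r)) has_vector_derivative fs (t, s)) (at s)"
    and lt: "\<And>t s. t > 0 \<Longrightarrow> ((\<lambda>u. f (u, s)) has_vector_derivative ft (t, s)) (at t)"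
    and lts: "\<And>t s. t > 0 \<Longrightarrow> ((\<lambda>r. ft (t, r)) has_vector_derivative fts (t, s)) (at s)"
    and lst: "\<And>t s. t > 0 \<Longrightarrow> ((\<lambda>u. fs (u, s)) has_vector_derivative fst (t, s)) (at t)"
    and c1: "continuous_on ({0<..} \<times> UNIV) fst"
    and c2: "continuous_on ({0<..} \<times> UNIV) fts"
    and t: "t > 0"
  shows "fts (t, s) = fst (t, s)"
proof -
  have E: "integral {c..d} (\<lambda>r. fst (t, r)) = integral {c..d} (\<lambda>r. fts (t, r))" if cd: "c \<le> d" for c d
  proof -
    have fi: "((\<lambda>r. fs (u, r)) has_integral (f (u, d) - f (u, c))) {c..d}" if "u > 0" for u
      by (rule fundamental_theorem_of_calculus[OF cd]) (auto intro: has_vector_derivative_at_within ls that)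
    have L: "((\<lambda>u. integral (cbox c d) (\<lambda>r. fs (u, r))) has_vector_derivative integral (cbox c d) (\<lambda>r. fst (t, r)))
        (at t within {0<..})"
    proof (rule leibniz_rule_vector_derivative[where fx="\<lambda>u r. fst (u, r)"])
      show "((\<lambda>u. fs (u, r)) has_vector_derivative fst (u, r)) (at u within {0<..})" if "u \<in> {0<..}" for u r
        using lst[of u r] that by (auto intro: has_vector_derivative_at_within)
      show "(\<lambda>r. fs (u, r)) integrable_on cbox c d" if "u \<in> {0<..}" for u
        using fi[of u] that by auto
      show "continuous_on ({0<..} \<times> cbox c d) (\<lambda>(x, y). fst (x, y))"
        unfolding case_prod_eta by (rule continuous_on_subset[OF c1]) auto
    qed (use t in auto)
    then have L': "((\<lambda>u. integral {c..d} (\<lambda>r. fs (u, r))) has_vector_derivative integral {c..d} (\<lambda>r. fst (t, r))) (at t)"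
      using at_within_open[of t "{0<..}"] t by simp
    have "((\<lambda>u. f (u, d) - f (u, c)) has_vector_derivative integral {c..d} (\<lambda>r. fst (t, r))) (at t)"
      by (rule has_vector_derivative_transform_within_open[OF L', of "{0<..}"]) (use t fi in \<open>auto intro: integral_unique\<close>)
    moreover have "((\<lambda>u. f (u, d) - f (u, c)) has_vector_derivative ft (t, d) - ft (t, c)) (at t)"
      by (intro has_vector_derivative_diff lt t)
    ultimately have "integral {c..d} (\<lambda>r. fst (t, r)) = ft (t, d) - ft (t, c)"
      using vector_derivative_unique_at by blast
    moreover have "((\<lambda>r. fts (t, r)) has_integral (ft (t, d) - ft (t, c))) {c..d}"
      by (rule fundamental_theorem_of_calculus[OF cd]) (auto intro: has_vector_derivative_at_within lts t)
    ultimately show ?thesis by (simp add: integral_unique)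
  qed
  have cline: "continuous_on UNIV (\<lambda>r. g (t, r))" if "continuous_on ({0<..} \<times> UNIV) g" for g :: "real \<times> real \<Rightarrow> 'b"
    by (rule continuous_on_compose2[OF that]) (use t in \<open>auto intro!: continuous_intros\<close>)
  define D where "D r = fst (t, r) - fts (t, r)" for r
  have cD: "continuous_on UNIV D" unfolding D_def[abs_def] by (intro continuous_intros cline c1 c2)
  have H0: "integral {s - 1..u} D = 0" if "u \<in> {s - 1..s + 1}" for u
  proof -
    have "integral {s - 1..u} D = integral {s - 1..u} (\<lambda>r. fst (t, r)) - integral {s - 1..u} (\<lambda>r. fts (t, r))"
      unfolding D_def
      by (rule Henstock_Kurzweil_Integration.integral_diff) (auto intro!: integrable_continuous_interval continuous_on_subset[OF cline] c1 c2)
    then show ?thesis using E[of "s - 1" u] that by simp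
  qed
  have "((\<lambda>u. integral {s - 1..u} D) has_vector_derivative D s) (at s within {s - 1..s + 1})"
    by (rule integral_has_vector_derivative) (auto intro: continuous_on_subset[OF cD])
  then have "((\<lambda>u. 0) has_vector_derivative D s) (at s within {s - 1..s + 1})"
    by (rule has_vector_derivative_transform[rotated 2]) (auto simp: H0)
  moreover have "((\<lambda>u. 0::'b) has_vector_derivative 0) (at s within {s - 1..s + 1})" by simp
  ultimately have "D s = 0"
    using vector_derivative_unique_within_closed_interval[of "s - 1" "s + 1" s "\<lambda>u. 0::'b"] by auto
  then show ?thesis unfolding D_def by simp
qed

lemma mono_from_deriv:
  fixes f f' :: "real \<Rightarrow> real"
  assumes d: "\<And>t. t \<ge> 0 \<Longrightarrow> (f has_real_derivative f' t) (at t within {0..})"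
    and nn: "\<And>t. t > 0 \<Longrightarrow> f' t \<ge> 0"
  shows "mono_on {0..} f"
proof (rule mono_onI)
  fix a b :: real assume ab: "a \<in> {0..}" "b \<in> {0..}" "a \<le> b"
  have c: "continuous_on {0..} f"
    using d by (auto simp: continuous_on_eq_continuous_within intro: DERIV_continuous)
  show "f a \<le> f b"
  proof (rule DERIV_nonneg_imp_increasing_open[OF ab(3)])
    fix x assume x: "a < x" "x < b"
    then have "x > 0" using ab by auto
    then show "\<exists>y. (f has_real_derivative y) (at x) \<and> 0 \<le> y"
      using d[of x] nn[of x] at_pos[of x] by auto
  next
    show "continuous_on {a..b} f" using c ab by (auto intro: continuous_on_subset)
  qed
qed

lemma two_tension:
  fixes sa sa1 sa2 sb sb1 sb2 ka kb :: "real \<Rightarrow> real"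
  assumes da: "\<And>s. (sa has_real_derivative sa1 s) (at s)" "\<And>s. (sa1 has_real_derivative sa2 s) (at s)"
    and db: "\<And>s. (sb has_real_derivative sb1 s) (at s)" "\<And>s. (sb1 has_real_derivative sb2 s) (at s)"
    and pa: "\<And>s. sa (s + 1) = sa s" and pb: "\<And>s. sb (s + 1) = sb s"
    and ta: "\<And>s. sa2 s - sa s * ka s = -1" and tb: "\<And>s. sb2 s - sb s * kb s = -1"
    and c: "continuous_on UNIV ka" "continuous_on UNIV kb"
  shows "integral {0..1} sb - integral {0..1} sa = integral {0..1} (\<lambda>s. sa s * sb s * (ka s - kb s))"
proof -
  have cv: "(g has_vector_derivative g' s) (at s)" if "(g has_real_derivative g' s) (at s)" for g g' s
    using that has_real_derivative_iff_has_vector_derivative by blast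
  have cva: "(sa has_vector_derivative sa1 s) (at s)" for s using cv[OF da(1)] .
  have cvb: "(sb has_vector_derivative sb1 s) (at s)" for s using cv[OF db(1)] .
  have pa1: "sa1 (s + 1) = sa1 s" for s by (rule deriv_periodic[of sa sa1, OF cva pa])
  have pb1: "sb1 (s + 1) = sb1 s" for s by (rule deriv_periodic[of sb sb1, OF cvb pb])
  have ca: "continuous_on UNIV sa" using da(1) by (auto intro!: continuous_at_imp_continuous_on DERIV_isCont)
  have cb: "continuous_on UNIV sb" using db(1) by (auto intro!: continuous_at_imp_continuous_on DERIV_isCont)
  have dg: "((\<lambda>s. sb s * sa1 s - sb1 s * sa s) has_real_derivative
      (sa s * sb s * (ka s - kb s) - sb s + sa s)) (at s)" for s
  proof -
    have "((\<lambda>s. sb s * sa1 s - sb1 s * sa s) has_real_derivative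
      (sb1 s * sa1 s + sb s * sa2 s - (sb2 s * sa s + sb1 s * sa1 s))) (at s)"
      by (auto intro!: derivative_eq_intros da db)
    moreover have "sb1 s * sa1 s + sb s * sa2 s - (sb2 s * sa s + sb1 s * sa1 s) = sa s * sb s * (ka s - kb s) - sb s + sa s"
    proof -
      have e1: "sa2 s = sa s * ka s - 1" using ta[of s] by (simp add: algebra_simps)
      have e2: "sb2 s = sb s * kb s - 1" using tb[of s] by (simp add: algebra_simps)
      show ?thesis by (simp add: e1 e2 algebra_simps)
    qed
    ultimately show ?thesis by simp
  qed
  have "((\<lambda>s. sa s * sb s * (ka s - kb s) - sb s + sa s) has_integral 0) {0..1}"
  proof (rule per_integral_zero[of "\<lambda>s. sb s * sa1 s - sb1 s * sa s"])
    show "((\<lambda>s. sb s * sa1 s - sb1 s * sa s) has_vector_derivative (sa s * sb s * (ka s - kb s) - sb s + sa s)) (at s)" for s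
      by (rule cv[OF dg])
  qed (use pa[of 0] pb[of 0] pa1[of 0] pb1[of 0] in auto)
  moreover have "((\<lambda>s. sa s * sb s * (ka s - kb s)) has_integral integral {0..1} (\<lambda>s. sa s * sb s * (ka s - kb s))) {0..1}"
    by (rule hasI) (intro continuous_intros ca cb c)
  moreover note hasI[OF ca, of 0 1] hasI[OF cb, of 0 1]
  ultimately have "((\<lambda>s. (sa s * sb s * (ka s - kb s) - sb s + sa s) - (sa s * sb s * (ka s - kb s)) + sb s - sa s)
      has_integral (0 - integral {0..1} (\<lambda>s. sa s * sb s * (ka s - kb s)) + integral {0..1} sb - integral {0..1} sa)) {0..1}"
    by (intro has_integral_diff has_integral_add)
  then have "((\<lambda>s. 0) has_integral (0 - integral {0..1} (\<lambda>s. sa s * sb s * (ka s - kb s)) + integral {0..1} sb - integral {0..1} sa)) {0..1}"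
    by simp
  then show ?thesis using has_integral_0[of "{0..1::real}"] has_integral_unique by fastforce
qed

lemma mono_tendsto_sup:
  fixes f :: "real \<Rightarrow> real"
  assumes m: "mono_on {0..} f" and b: "\<And>t. t \<ge> 0 \<Longrightarrow> f t \<le> M"
  shows "(f \<longlongrightarrow> (SUP t\<in>{0..}. f t)) at_top"
proof -
  have bdd: "bdd_above (f ` {0..})" using b by (intro bdd_aboveI2[of _ _ M]) auto
  show ?thesis
  proof (rule order_tendstoI)
    fix y assume "y < (SUP t\<in>{0..}. f t)"
    then obtain t0 where t0: "t0 \<ge> 0" "y < f t0" using less_cSUP_iff[OF _ bdd] by auto
    show "\<forall>\<^sub>F t in at_top. y < f t"
      unfolding eventually_at_top_linorder
    proof (rule exI[of _ t0], intro allI impI)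
      fix n assume "t0 \<le> n"
      then have "f t0 \<le> f n" by (intro mono_onD[OF m]) (use t0 in auto)
      then show "y < f n" using t0 by linarith
    qed
  next
    fix y assume "y > (SUP t\<in>{0..}. f t)"
    show "\<forall>\<^sub>F t in at_top. f t < y"
      unfolding eventually_at_top_linorder
      by (rule exI[of _ 0]) (use \<open>y > _\<close> cSUP_upper[OF _ bdd] in \<open>fastforce intro: le_less_trans\<close>)
  qed
qed

lemma limits:
  fixes A B :: "real \<Rightarrow> real"
  assumes mA: "mono_on {0..} A" and mB: "mono_on {0..} B"
    and BA: "\<And>t. t \<ge> 0 \<Longrightarrow> B t \<le> A t" and AM: "\<And>t. t \<ge> 0 \<Longrightarrow> A t \<le> M"
    and dA: "\<And>t. t > 0 \<Longrightarrow> (A has_real_derivative 2 * (A t - B t)) (at t)"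
  shows "\<exists>L. (B \<longlongrightarrow> L) at_top \<and> (A \<longlongrightarrow> L) at_top"
proof -
  define La where "La = (SUP t\<in>{0..}. A t)"
  define Lb where "Lb = (SUP t\<in>{0..}. B t)"
  have tA: "(A \<longlongrightarrow> La) at_top" unfolding La_def by (rule mono_tendsto_sup[OF mA AM])
  have BM: "B t \<le> M" if "t \<ge> 0" for t using BA[OF that] AM[OF that] by linarith
  have tB: "(B \<longlongrightarrow> Lb) at_top" unfolding Lb_def by (rule mono_tendsto_sup[OF mB BM])
  have bddB: "bdd_above (B ` {0..})" using BM by (intro bdd_aboveI2[of _ _ M]) auto
  have Ble: "B t \<le> Lb" if "t \<ge> 0" for t unfolding Lb_def by (rule cSUP_upper[OF _ bddB]) (use that in auto)
  have "Lb \<le> La"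
    by (rule tendsto_le[OF _ tA tB]) (auto simp: eventually_at_top_linorder intro!: exI[of _ 0] BA)
  moreover have "\<not> Lb < La"
  proof
    assume lt: "Lb < La"
    define d where "d = La - Lb"
    have d: "d > 0" using lt by (simp add: d_def)
    have "\<forall>\<^sub>F t in at_top. La - d/2 < A t"
      using tA d by (auto simp: order_tendsto_iff)
    then obtain t1 where t1: "\<And>t. t \<ge> t1 \<Longrightarrow> La - d/2 < A t"
      by (auto simp: eventually_at_top_linorder)
    define t0 where "t0 = max t1 1"
    have t0: "t0 > 0" "t0 \<ge> t1" by (auto simp: t0_def)
    have grow: "A t0 + d * n \<le> A (t0 + n)" if "n \<ge> 0" for n :: real
    proof -
      have "(\<lambda>t. A t - d * t) t0 \<le> (\<lambda>t. A t - d * t) (t0 + n)"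
      proof (rule DERIV_nonneg_imp_increasing_open[of t0 "t0 + n" "\<lambda>t. A t - d * t"])
        show "t0 \<le> t0 + n" using that by simp
        fix x assume x: "t0 < x" "x < t0 + n"
        then have xp: "x > 0" using t0 by linarith
        have "((\<lambda>t. A t - d * t) has_real_derivative 2 * (A x - B x) - d) (at x)"
          by (auto intro!: derivative_eq_intros dA xp)
        moreover have "2 * (A x - B x) - d \<ge> 0"
        proof -
          have "La - d/2 < A x" using t1[of x] x t0 by auto
          moreover have "B x \<le> Lb" using Ble[of x] xp by auto
          ultimately show ?thesis unfolding d_def by (simp add: field_simps)
        qed
        ultimately show "\<exists>y. ((\<lambda>t. A t - d * t) has_real_derivative y) (at x) \<and> 0 \<le> y" by blast
      next
        have "isCont (\<lambda>t. A t - d * t) x" if "x \<in> {t0..t0 + n}" for x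
        proof -
          have "x > 0" using that t0 by auto
          then show ?thesis by (auto intro!: continuous_intros DERIV_isCont[OF dA])
        qed
        then show "continuous_on {t0..t0 + n} (\<lambda>t. A t - d * t)"
          by (auto intro: continuous_at_imp_continuous_on)
      qed
      then show ?thesis by (simp add: algebra_simps)
    qed
    define n where "n = (M - A t0) / d + 1"
    have n: "n \<ge> 0" using AM[of t0] t0 d by (auto simp: n_def)
    have "A t0 + d * n \<le> M" using grow[OF n] AM[of "t0 + n"] t0 n by linarith
    moreover have "d * n = M - A t0 + d" using d by (simp add: n_def field_simps)
    ultimately show False using d by linarith
  qed
  ultimately have "La = Lb" by linarith
  then show ?thesis using tA tB by auto
qed

lemma cinX: "continuous_on X f \<Longrightarrow> continuous_on ({0<..} \<times> UNIV) f"
  by (rule continuous_on_subset) (auto simp: X_def)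

lemma cfix: "continuous_on X g \<Longrightarrow> t \<ge> 0 \<Longrightarrow> continuous_on ({0<..} \<times> UNIV) (\<lambda>z. g (t, snd z))"
  by (rule continuous_on_compose2[of X g]) (auto intro!: continuous_intros simp: X_def)

theorem proposition3p1:
  fixes \<xi> :: "real \<Rightarrow> real \<Rightarrow> 'a::euclidean_space"
    and \<sigma> :: "real \<Rightarrow> real \<Rightarrow> real"
  assumes dim: "DIM('a) \<ge> 2"
    and smooth_xi: "Cinf_on ({0..} \<times> UNIV) (\<lambda>(\<tau>, s). \<xi> \<tau> s)"
    and smooth_sigma: "Cinf_on ({0..} \<times> UNIV) (\<lambda>(\<tau>, s). \<sigma> \<tau> s)"
    and per_xi: "\<And>\<tau> s. \<tau> \<ge> 0 \<Longrightarrow> \<xi> \<tau> (s + 1) = \<xi> \<tau> s"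
    and per_sigma: "\<And>\<tau> s. \<tau> \<ge> 0 \<Longrightarrow> \<sigma> \<tau> (s + 1) = \<sigma> \<tau> s"
    and arclength: "\<And>\<tau> s. \<tau> \<ge> 0 \<Longrightarrow> norm (dS \<xi> \<tau> s) = 1"
    and centered: "\<And>\<tau>. \<tau> \<ge> 0 \<Longrightarrow> integral {0..1} (\<lambda>s. \<xi> \<tau> s) = 0"
    and flow: "\<And>\<tau> s. \<tau> \<ge> 0 \<Longrightarrow>
      ((\<lambda>t. \<xi> t s) has_vector_derivative
         (dS (\<lambda>t r. \<sigma> t r *\<^sub>R dS \<xi> t r) \<tau> s + \<xi> \<tau> s)) (at \<tau> within {0..})"
    and tension: "\<And>\<tau> s. \<tau> \<ge> 0 \<Longrightarrow>
      dS (dS \<sigma>) \<tau> s - \<sigma> \<tau> s * (norm (dS (dS \<xi>) \<tau> s))\<^sup>2 = -1"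
  shows "mono_on {0..} (\<lambda>\<tau>. integral {0..1} (\<lambda>s. (norm (\<xi> \<tau> s))\<^sup>2))
       \<and> (\<forall>\<tau>\<ge>0. integral {0..1} (\<lambda>s. (norm (\<xi> \<tau> s))\<^sup>2) \<le> 1 / (4 * pi\<^sup>2))
       \<and> mono_on {0..} (\<lambda>\<tau>. integral {0..1} (\<lambda>s. \<sigma> \<tau> s))
       \<and> (\<forall>\<tau>\<ge>0. integral {0..1} (\<lambda>s. \<sigma> \<tau> s) \<le> integral {0..1} (\<lambda>s. (norm (\<xi> \<tau> s))\<^sup>2))
       \<and> (\<exists>L. ((\<lambda>\<tau>. integral {0..1} (\<lambda>s. \<sigma> \<tau> s)) \<longlongrightarrow> L) at_top
              \<and> ((\<lambda>\<tau>. integral {0..1} (\<lambda>s. (norm (\<xi> \<tau> s))\<^sup>2)) \<longlongrightarrow> L) at_top)"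
proof -
  define F where "F = (\<lambda>(\<tau>, s). \<xi> \<tau> s)"
  define G where "G = (\<lambda>(\<tau>, s). \<sigma> \<tau> s)"
  have F: "F (t, s) = \<xi> t s" for t s by (simp add: F_def)
  have G: "G (t, s) = \<sigma> t s" for t s by (simp add: G_def)
  have cinfF: "Cinf_on X F" using smooth_xi by (simp add: X_def F_def)
  have cinfG: "Cinf_on X G" using smooth_sigma by (simp add: X_def G_def)
  obtain Ft Fs where dF: "\<forall>z\<in>X. (F has_derivative (\<lambda>(h, k). h *\<^sub>R Ft z + k *\<^sub>R Fs z)) (at z within X)"
    and cinfFt: "Cinf_on X Ft" and cinfFs: "Cinf_on X Fs" using Cinf_D[OF cinfF] by blast
  obtain Fst Fss where dFs: "\<forall>z\<in>X. (Fs has_derivative (\<lambda>(h, k). h *\<^sub>R Fst z + k *\<^sub>R Fss z)) (at z within X)"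
    and cinfFst: "Cinf_on X Fst" and cinfFss: "Cinf_on X Fss" using Cinf_D[OF cinfFs] by blast
  obtain Fsst Fsss where dFss: "\<forall>z\<in>X. (Fss has_derivative (\<lambda>(h, k). h *\<^sub>R Fsst z + k *\<^sub>R Fsss z)) (at z within X)"
    and cinfFsst: "Cinf_on X Fsst" and cinfFsss: "Cinf_on X Fsss" using Cinf_D[OF cinfFss] by blast
  obtain Ftt Fts where dFt: "\<forall>z\<in>X. (Ft has_derivative (\<lambda>(h, k). h *\<^sub>R Ftt z + k *\<^sub>R Fts z)) (at z within X)"
    and cinfFts: "Cinf_on X Fts" using Cinf_D[OF cinfFt] by blast
  obtain Fstt Fsts where dFst: "\<forall>z\<in>X. (Fst has_derivative (\<lambda>(h, k). h *\<^sub>R Fstt z + k *\<^sub>R Fsts z)) (at z within X)"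
    and cinfFsts: "Cinf_on X Fsts" using Cinf_D[OF cinfFst] by blast
  obtain Gt Gs where dG: "\<forall>z\<in>X. (G has_derivative (\<lambda>(h, k). h *\<^sub>R Gt z + k *\<^sub>R Gs z)) (at z within X)"
    and cinfGt: "Cinf_on X Gt" and cinfGs: "Cinf_on X Gs" using Cinf_D[OF cinfG] by blast
  obtain Gst Gss where dGs: "\<forall>z\<in>X. (Gs has_derivative (\<lambda>(h, k). h *\<^sub>R Gst z + k *\<^sub>R Gss z)) (at z within X)"
    and cinfGss: "Cinf_on X Gss" using Cinf_D[OF cinfGs] by blast
  note cont = Cinf_cont[OF cinfF] Cinf_cont[OF cinfFt] Cinf_cont[OF cinfFs] Cinf_cont[OF cinfFst]
    Cinf_cont[OF cinfFss] Cinf_cont[OF cinfFsst] Cinf_cont[OF cinfFsss] Cinf_cont[OF cinfFts]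
    Cinf_cont[OF cinfFsts] Cinf_cont[OF cinfG] Cinf_cont[OF cinfGt] Cinf_cont[OF cinfGs] Cinf_cont[OF cinfGss]
  have realv: "(f has_real_derivative f') (at s)" if "(f has_vector_derivative f') (at s)" for f f' s
    using that has_real_derivative_iff_has_vector_derivative by blast

  have sx: "((\<lambda>r. \<xi> t r) has_vector_derivative Fs (t, s)) (at s)" if "t \<ge> 0" for t s
    using line_s[OF dF that] by (simp add: F)
  have sFs: "((\<lambda>r. Fs (t, r)) has_vector_derivative Fss (t, s)) (at s)" if "t \<ge> 0" for t s
    using line_s[OF dFs that] .
  have sFss: "((\<lambda>r. Fss (t, r)) has_vector_derivative Fsss (t, s)) (at s)" if "t \<ge> 0" for t s
    using line_s[OF dFss that] .
  have ssig: "((\<lambda>r. \<sigma> t r) has_real_derivative Gs (t, s)) (at s)" if "t \<ge> 0" for t s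
    using line_s[OF dG that] by (simp add: G has_real_derivative_iff_has_vector_derivative)
  have sGs: "((\<lambda>r. Gs (t, r)) has_real_derivative Gss (t, s)) (at s)" if "t \<ge> 0" for t s
    using line_s[OF dGs that] by (simp add: has_real_derivative_iff_has_vector_derivative)

  have dS1: "dS \<xi> t = (\<lambda>r. Fs (t, r))" if "t \<ge> 0" for t
    by (rule ext) (simp add: dS_def vector_derivative_at[OF sx[OF that]])
  have dS2: "dS (dS \<xi>) t s = Fss (t, s)" if "t \<ge> 0" for t s
    unfolding dS_def[of "dS \<xi>"] dS1[OF that] by (rule vector_derivative_at[OF sFs[OF that]])
  have dSs1: "dS \<sigma> t = (\<lambda>r. Gs (t, r))" if "t \<ge> 0" for t
    by (rule ext) (simp add: dS_def vector_derivative_at ssig[OF that] has_real_derivative_iff_has_vector_derivative[symmetric])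
  have dSs2: "dS (dS \<sigma>) t s = Gss (t, s)" if "t \<ge> 0" for t s
    unfolding dS_def[of "dS \<sigma>"] dSs1[OF that]
    by (rule vector_derivative_at) (use sGs[OF that] in \<open>simp add: has_real_derivative_iff_has_vector_derivative\<close>)
  have dSflux: "dS (\<lambda>t r. \<sigma> t r *\<^sub>R dS \<xi> t r) t s = Gs (t, s) *\<^sub>R Fs (t, s) + \<sigma> t s *\<^sub>R Fss (t, s)"
    if "t \<ge> 0" for t s
  proof -
    have "((\<lambda>r. \<sigma> t r *\<^sub>R Fs (t, r)) has_vector_derivative (\<sigma> t s *\<^sub>R Fss (t, s) + Gs (t, s) *\<^sub>R Fs (t, s))) (at s)"
      by (rule has_vector_derivative_scaleR[OF ssig[OF that] sFs[OF that]])
    then show ?thesis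
      unfolding dS_def[of "\<lambda>t r. \<sigma> t r *\<^sub>R dS \<xi> t r"] dS1[OF that]
      by (simp add: vector_derivative_at add.commute)
  qed

  have CI: "curve (\<xi> t) (\<lambda>r. Fs (t, r)) (\<lambda>r. Fss (t, r)) (\<lambda>r. Fsss (t, r)) (\<sigma> t) (\<lambda>r. Gs (t, r)) (\<lambda>r. Gss (t, r))"
    if t: "t \<ge> 0" for t
  proof
    show "((\<xi> t) has_vector_derivative Fs (t, s)) (at s)" for s using sx[OF t] by simp
    show "((\<lambda>r. Fs (t, r)) has_vector_derivative Fss (t, s)) (at s)" for s by (rule sFs[OF t])
    show "((\<lambda>r. Fss (t, r)) has_vector_derivative Fsss (t, s)) (at s)" for s by (rule sFss[OF t])
    show "continuous_on UNIV (\<lambda>r. Fsss (t, r))" by (rule cont_line_s[OF Cinf_cont[OF cinfFsss] t])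
    show "(\<sigma> t has_real_derivative Gs (t, s)) (at s)" for s using ssig[OF t] by simp
    show "((\<lambda>r. Gs (t, r)) has_real_derivative Gss (t, s)) (at s)" for s by (rule sGs[OF t])
    show "continuous_on UNIV (\<lambda>r. Gss (t, r))" by (rule cont_line_s[OF Cinf_cont[OF cinfGss] t])
    show "\<xi> t (s + 1) = \<xi> t s" for s by (rule per_xi[OF t])
    show "\<sigma> t (s + 1) = \<sigma> t s" for s by (rule per_sigma[OF t])
    show "norm (Fs (t, s)) = 1" for s using arclength[OF t, of s] dS1[OF t] by simp
    show "Gss (t, s) - \<sigma> t s * (norm (Fss (t, s)))\<^sup>2 = -1" for s
      using tension[OF t, of s] dS2[OF t] dSs2[OF t] by simp
  qed
  define We where "We t s = Gs (t, s) *\<^sub>R Fs (t, s) + \<sigma> t s *\<^sub>R Fss (t, s) + \<xi> t s" for t s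
  define We' where "We' t s = Gss (t, s) *\<^sub>R Fs (t, s) + (2 * Gs (t, s)) *\<^sub>R Fss (t, s) + \<sigma> t s *\<^sub>R Fsss (t, s) + Fs (t, s)" for t s
  have Ft_eq: "Ft (t, s) = We t s" if t: "t \<ge> 0" for t s
  proof -
    have "((\<lambda>u. \<xi> u s) has_vector_derivative Ft (t, s)) (at t within {0..})"
      using line_t[OF dF t, of s] by (simp add: F)
    moreover have "((\<lambda>u. \<xi> u s) has_vector_derivative We t s) (at t within {0..})"
      using flow[OF t, of s] dSflux[OF t, of s] by (simp add: We_def)
    ultimately show ?thesis by (rule unique_within_Ici[OF t])
  qed
  define A where "A t = integral {0..1} (\<lambda>s. (norm (\<xi> t s))\<^sup>2)" for t
  define B where "B t = integral {0..1} (\<lambda>s. \<sigma> t s)" for t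
  have BA: "B t \<le> A t" if t: "t \<ge> 0" for t
    using curve.sigma_le[OF CI[OF t]] by (simp add: A_def B_def)
  have AM: "A t \<le> 1 / (4 * pi\<^sup>2)" if t: "t \<ge> 0" for t
    using curve.wirt_vec[OF CI[OF t]] centered[OF t] by (simp add: A_def)
  have clx: "continuous_on UNIV (\<lambda>r. \<xi> t r)" if "t \<ge> 0" for t
    using cont_line_s[OF Cinf_cont[OF cinfF] that] by (simp add: F)
  have cls: "continuous_on UNIV (\<lambda>r. \<sigma> t r)" if "t \<ge> 0" for t
    using cont_line_s[OF Cinf_cont[OF cinfG] that] by (simp add: G)
  have dA: "(A has_real_derivative 2 * (A t - B t)) (at t within {0..})" if t: "t \<ge> 0" for t
  proof -
    have L: "((\<lambda>u. integral (cbox 0 1) (\<lambda>s. (norm (\<xi> u s))\<^sup>2)) has_vector_derivative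
        integral (cbox 0 1) (\<lambda>s. 2 * inner (\<xi> t s) (Ft (t, s)))) (at t within {0..})"
    proof (rule leibniz_rule_vector_derivative[where fx="\<lambda>u s. 2 * inner (\<xi> u s) (Ft (u, s))"])
      fix u s :: real assume u: "u \<in> {0..}"
      have lx: "((\<lambda>u. \<xi> u s) has_vector_derivative Ft (u, s)) (at u within {0..})"
        using line_t[OF dF, of u s] u by (simp add: F)
      have "((\<lambda>u. inner (\<xi> u s) (\<xi> u s)) has_vector_derivative 2 * inner (\<xi> u s) (Ft (u, s))) (at u within {0..})"
        using hvd_inner[OF lx lx] by (simp add: inner_commute)
      then show "((\<lambda>u. (norm (\<xi> u s))\<^sup>2) has_vector_derivative 2 * inner (\<xi> u s) (Ft (u, s))) (at u within {0..})"
        by (simp add: power2_norm_eq_inner)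
    next
      fix u :: real assume u: "u \<in> {0..}"
      have "continuous_on UNIV (\<lambda>s. (norm (\<xi> u s))\<^sup>2)"
        by (intro continuous_intros clx) (use u in auto)
      then show "(\<lambda>s. (norm (\<xi> u s))\<^sup>2) integrable_on cbox 0 1" by (simp add: intI)
    next
      have "continuous_on X (\<lambda>z. 2 * inner (F z) (Ft z))"
        by (intro continuous_intros cont)
      then have "continuous_on ({0..} \<times> cbox 0 1) (\<lambda>z. 2 * inner (F z) (Ft z))"
        by (rule continuous_on_subset) (auto simp: X_def)
      moreover have "(\<lambda>z. 2 * inner (F z) (Ft z)) = (\<lambda>(u, s). 2 * inner (\<xi> u s) (Ft (u, s)))"
        by (auto simp: F_def)
      ultimately show "continuous_on ({0..} \<times> cbox 0 1) (\<lambda>(u, s). 2 * inner (\<xi> u s) (Ft (u, s)))" by metis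
    qed (use t in auto)
    have "integral {0..1} (\<lambda>s. 2 * inner (\<xi> t s) (Ft (t, s))) = 2 * integral {0..1} (\<lambda>s. inner (\<xi> t s) (We t s))"
      using Ft_eq[OF t] by simp
    also have "\<dots> = 2 * (A t - B t)"
      using curve.xWe[OF CI[OF t]] by (simp add: We_def A_def B_def algebra_simps)
    finally show ?thesis using L
      by (simp add: A_def[abs_def] has_real_derivative_iff_has_vector_derivative)
  qed
  have monoA: "mono_on {0..} A"
    by (rule mono_from_deriv[OF dA]) (use BA in auto)
  have dB: "(B has_real_derivative integral {0..1} (\<lambda>s. Gt (t, s))) (at t within {0..})" if t: "t \<ge> 0" for t
  proof -
    have L: "((\<lambda>u. integral (cbox 0 1) (\<lambda>s. \<sigma> u s)) has_vector_derivative
        integral (cbox 0 1) (\<lambda>s. Gt (t, s))) (at t within {0..})"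
    proof (rule leibniz_rule_vector_derivative[where fx="\<lambda>u s. Gt (u, s)"])
      fix u s :: real assume u: "u \<in> {0..}"
      show "((\<lambda>u. \<sigma> u s) has_vector_derivative Gt (u, s)) (at u within {0..})"
        using line_t[OF dG, of u s] u by (simp add: G)
    next
      fix u :: real assume u: "u \<in> {0..}"
      show "(\<lambda>s. \<sigma> u s) integrable_on cbox 0 1" using cls[of u] u by (simp add: intI)
    next
      show "continuous_on ({0..} \<times> cbox 0 1) (\<lambda>(u, s). Gt (u, s))"
        unfolding case_prod_eta by (rule continuous_on_subset[OF cont(11)]) (auto simp: X_def)
    qed (use t in auto)
    then show ?thesis by (simp add: B_def[abs_def] has_real_derivative_iff_has_vector_derivative)
  qed
  have Bpos: "integral {0..1} (\<lambda>s. Gt (t, s)) \<ge> 0" if t: "t > 0" for t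
  proof -
    have t0: "t \<ge> 0" using t by simp
    define n where "n h s = (norm (Fss (h, s)))\<^sup>2" for h s
    define C where "C h = integral {0..1} (\<lambda>s. \<sigma> t s * \<sigma> h s * (n t s - n h s))" for h
    have cn: "continuous_on UNIV (n h)" if "h \<ge> 0" for h
      unfolding n_def[abs_def] by (intro continuous_intros cont_line_s[OF Cinf_cont[OF cinfFss] that])
    have CB: "C h = B h - B t" if h: "h > 0" for h
    proof -
      have "integral {0..1} (\<sigma> h) - integral {0..1} (\<sigma> t) = integral {0..1} (\<lambda>s. \<sigma> t s * \<sigma> h s * (n t s - n h s))"
      proof (rule two_tension)
        show "(\<sigma> t has_real_derivative Gs (t, s)) (at s)" for s using ssig[OF t0] by simp
        show "((\<lambda>r. Gs (t, r)) has_real_derivative Gss (t, s)) (at s)" for s by (rule sGs[OF t0])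
        show "(\<sigma> h has_real_derivative Gs (h, s)) (at s)" for s using ssig[of h] h by simp
        show "((\<lambda>r. Gs (h, r)) has_real_derivative Gss (h, s)) (at s)" for s using sGs[of h] h by simp
        show "\<sigma> t (s + 1) = \<sigma> t s" for s by (rule per_sigma[OF t0])
        show "\<sigma> h (s + 1) = \<sigma> h s" for s using per_sigma[of h] h by simp
        show "Gss (t, s) - \<sigma> t s * n t s = -1" for s using curve.tens[OF CI[OF t0]] by (simp add: n_def)
        show "Gss (h, s) - \<sigma> h s * n h s = -1" for s using curve.tens[OF CI[of h]] h by (simp add: n_def)
        show "continuous_on UNIV (n t)" by (rule cn[OF t0])
        show "continuous_on UNIV (n h)" using cn[of h] h by simp
      qed
      then show ?thesis by (simp add: C_def B_def)
    qed
    define fx where "fx u s = \<sigma> t s * (Gt (u, s) * (n t s - n u s) + \<sigma> u s * (- (2 * inner (Fss (u, s)) (Fsst (u, s)))))" for u s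
    have LC: "((\<lambda>u. integral (cbox 0 1) (\<lambda>s. \<sigma> t s * \<sigma> u s * (n t s - n u s))) has_vector_derivative
        integral (cbox 0 1) (fx t)) (at t within {0<..})"
    proof (rule leibniz_rule_vector_derivative[where fx=fx])
      fix u s :: real assume u: "u \<in> {0<..}"
      have gs: "((\<lambda>u. \<sigma> u s) has_real_derivative Gt (u, s)) (at u within {0<..})"
        using line_t[OF dG, of u s] u
        by (auto simp: G has_real_derivative_iff_has_vector_derivative intro: has_vector_derivative_within_subset)
      have lf: "((\<lambda>u. Fss (u, s)) has_vector_derivative Fsst (u, s)) (at u within {0<..})"
        using line_t[OF dFss, of u s] u by (auto intro: has_vector_derivative_within_subset)
      have gn: "((\<lambda>u. n u s) has_real_derivative 2 * inner (Fss (u, s)) (Fsst (u, s))) (at u within {0<..})"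
        using hvd_inner[OF lf lf]
        by (simp add: n_def power2_norm_eq_inner inner_commute has_real_derivative_iff_has_vector_derivative)
      have "((\<lambda>u. \<sigma> t s * \<sigma> u s * (n t s - n u s)) has_real_derivative fx u s) (at u within {0<..})"
        unfolding fx_def by (auto intro!: derivative_eq_intros gs gn simp: algebra_simps)
      then show "((\<lambda>u. \<sigma> t s * \<sigma> u s * (n t s - n u s)) has_vector_derivative fx u s) (at u within {0<..})"
        by (simp add: has_real_derivative_iff_has_vector_derivative)
    next
      fix u :: real assume u: "u \<in> {0<..}"
      have "continuous_on UNIV (\<lambda>s. \<sigma> t s * \<sigma> u s * (n t s - n u s))"
        using u t0 by (intro continuous_intros cls cn) auto
      then show "(\<lambda>s. \<sigma> t s * \<sigma> u s * (n t s - n u s)) integrable_on cbox 0 1" by (simp add: intI)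
    next
      have "continuous_on ({0<..} \<times> UNIV) (\<lambda>z. G (t, snd z) * (Gt z * ((norm (Fss (t, snd z)))\<^sup>2 - (norm (Fss z))\<^sup>2)
          + G z * (- (2 * inner (Fss z) (Fsst z)))))"
        by (intro continuous_intros cfix[OF cont(10) t0] cfix[OF cont(5) t0] cinX cont)
      then have "continuous_on ({0<..} \<times> cbox 0 1) (\<lambda>z. G (t, snd z) * (Gt z * ((norm (Fss (t, snd z)))\<^sup>2 - (norm (Fss z))\<^sup>2)
          + G z * (- (2 * inner (Fss z) (Fsst z)))))"
        by (rule continuous_on_subset) auto
      moreover have "(\<lambda>z. G (t, snd z) * (Gt z * ((norm (Fss (t, snd z)))\<^sup>2 - (norm (Fss z))\<^sup>2)
          + G z * (- (2 * inner (Fss z) (Fsst z))))) = (\<lambda>(u, s). fx u s)"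
        by (auto simp: G_def fx_def n_def)
      ultimately show "continuous_on ({0<..} \<times> cbox 0 1) (\<lambda>(u, s). fx u s)" by metis
    qed (use t in auto)
    have dC: "(C has_vector_derivative integral {0..1} (fx t)) (at t)"
      using LC at_within_open[of t "{0<..}"] t by (simp add: C_def[abs_def])
    have dB': "(B has_vector_derivative integral {0..1} (fx t)) (at t)"
    proof (rule has_vector_derivative_transform_within_open[of "\<lambda>h. B t + C h" _ t "{0<..}"])
      show "((\<lambda>h. B t + C h) has_vector_derivative integral {0..1} (fx t)) (at t)"
        using has_vector_derivative_add[OF has_vector_derivative_const dC] by simp
    qed (use t CB in auto)
    have "(B has_vector_derivative integral {0..1} (\<lambda>s. Gt (t, s))) (at t)"
      using dB[OF t0] at_pos[OF t] by (simp add: has_real_derivative_iff_has_vector_derivative)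
    then have eqI: "integral {0..1} (\<lambda>s. Gt (t, s)) = integral {0..1} (fx t)"
      using dB' vector_derivative_unique_at by blast
    have sw1: "Fsts (u, s) = Fsst (u, s)" if "u > 0" for u s
    proof (rule schwarz[where f=Fs and ft=Fst and fs=Fss])
      show "((\<lambda>r. Fs (u, r)) has_vector_derivative Fss (u, s)) (at s)" if "u > 0" for u s
        using sFs[of u s] that by simp
      show "((\<lambda>v. Fs (v, s)) has_vector_derivative Fst (u, s)) (at u)" if "u > 0" for u s
        by (rule line_t_at[OF dFs that])
      show "((\<lambda>r. Fst (u, r)) has_vector_derivative Fsts (u, s)) (at s)" if "u > 0" for u s
        using line_s[OF dFst, of u s] that by simp
      show "((\<lambda>v. Fss (v, s)) has_vector_derivative Fsst (u, s)) (at u)" if "u > 0" for u s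
        by (rule line_t_at[OF dFss that])
    qed (use that in \<open>auto intro: cinX cont\<close>)
    have sw2: "Fts (u, s) = Fst (u, s)" if "u > 0" for u s
    proof (rule schwarz[where f=F and ft=Ft and fs=Fs])
      show "((\<lambda>r. F (u, r)) has_vector_derivative Fs (u, s)) (at s)" if "u > 0" for u s
        using line_s[OF dF, of u s] that by simp
      show "((\<lambda>v. F (v, s)) has_vector_derivative Ft (u, s)) (at u)" if "u > 0" for u s
        by (rule line_t_at[OF dF that])
      show "((\<lambda>r. Ft (u, r)) has_vector_derivative Fts (u, s)) (at s)" if "u > 0" for u s
        using line_s[OF dFt, of u s] that by simp
      show "((\<lambda>v. Fs (v, s)) has_vector_derivative Fst (u, s)) (at u)" if "u > 0" for u s
        by (rule line_t_at[OF dFs that])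
    qed (use that in \<open>auto intro: cinX cont\<close>)
    have Fts_eq: "Fts (t, s) = We' t s" for s
    proof -
      have "((\<lambda>r. Ft (t, r)) has_vector_derivative Fts (t, s)) (at s)"
        using line_s[OF dFt t0] .
      moreover have "(\<lambda>r. Ft (t, r)) = We t" using Ft_eq[OF t0] by auto
      ultimately have "(We t has_vector_derivative Fts (t, s)) (at s)" by simp
      moreover have "(We t has_vector_derivative We' t s) (at s)"
        using curve.dWe[OF CI[OF t0], of s] by (simp add: We_def[abs_def] We'_def)
      ultimately show ?thesis using vector_derivative_unique_at by blast
    qed
    have neg: "integral {0..1} (\<lambda>s. inner ((\<sigma> t s)\<^sup>2 *\<^sub>R Fss (t, s)) (Fsts (t, s))) \<le> 0"
    proof (rule curve.Bp_int[OF CI[OF t0], where Y="\<lambda>r. Fst (t, r)"])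
      show "((\<lambda>r. Fst (t, r)) has_vector_derivative Fsts (t, s)) (at s)" for s
        using line_s[OF dFst t0] .
      show "Fst (t, s) = Gss (t, s) *\<^sub>R Fs (t, s) + (2 * Gs (t, s)) *\<^sub>R Fss (t, s) + \<sigma> t s *\<^sub>R Fsss (t, s) + Fs (t, s)" for s
        using sw2[OF t, of s] Fts_eq[of s] by (simp add: We'_def)
      show "continuous_on UNIV (\<lambda>r. Fsts (t, r))" by (rule cont_line_s[OF cont(9) t0])
    qed
    have "integral {0..1} (fx t) = integral {0..1} (\<lambda>s. (-2) * inner ((\<sigma> t s)\<^sup>2 *\<^sub>R Fss (t, s)) (Fsts (t, s)))"
      by (rule Henstock_Kurzweil_Integration.integral_cong) (simp add: fx_def sw1[OF t] power2_eq_square algebra_simps)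
    also have "\<dots> = (-2) * integral {0..1} (\<lambda>s. inner ((\<sigma> t s)\<^sup>2 *\<^sub>R Fss (t, s)) (Fsts (t, s)))"
      by simp
    finally show ?thesis using eqI neg by simp
  qed
  have monoB: "mono_on {0..} B"
    by (rule mono_from_deriv[OF dB]) (auto intro: Bpos)
  have lim: "\<exists>L. (B \<longlongrightarrow> L) at_top \<and> (A \<longlongrightarrow> L) at_top"
  proof (rule limits[OF monoA monoB BA AM])
    show "(A has_real_derivative 2 * (A t - B t)) (at t)" if "t > 0" for t
      using dA[of t] at_pos[OF that] that by simp
  qed
  show ?thesis
    using monoA monoB BA AM lim unfolding A_def[abs_def] B_def[abs_def] by auto
qed

end
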